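(* Let $T$ be an $\omega_2$-Kurepa-tree, for each $\alpha<\omega_2$ let $\xi\mapsto\tau(\alpha,\xi)$ be a map from $\omega_1$ onto the level $T_\alpha$, and let $A_\iota$ ($\iota<\omega_2$) be unbounded subsets of $\omega_2$. Then there is a cofinal branch $b$ through $T$ that oscillates on every $A_\iota$, $\iota<\omega_2$.
   Context: An $\omega_2$-Kurepa-tree is a tree of height $\omega_2$ all of whose levels have size $\leq\aleph_1$ and which has at least $\aleph_3$ cofinal ($\omega_2$-)branches. Given the enumeration $\tau$, a cofinal branch $b$ is identified with the function $b:\omega_2\to\omega_1$ where $b(\alpha)$ is the least $\xi$ such that $\tau(\alpha,\xi)$ is the node of $b$ on level $\alpha$. For unbounded $A\subseteq\omega_2$, $b$ oscillates on $A$ if for all $\alpha<\omega_2$ and all $\zeta<\omega_1$ there are $\beta>\alpha$ with $\beta\in A$ and $\xi>\zeta$ such that $b(\beta)=\xi$. *)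

theory Defs
  imports Main
begin

unbundle cardinal_syntax

text \<open>The well-order of a wellorder type, as a relation (used to identify the
  type with an initial ordinal).\<close>
definition ord_rel :: "('a::wellorder) rel" where
  "ord_rel = {(x, y). x \<le> y}"

text \<open>A tree of height the (well-ordered) index type 'k, given by its levels
  lev and its strict tree order lt.\<close>
definition tree_nodes :: "('k \<Rightarrow> 'n set) \<Rightarrow> 'n set" where
  "tree_nodes lev = (\<Union>\<alpha>. lev \<alpha>)"

definition is_tree :: "(('k::wellorder) \<Rightarrow> 'n set) \<Rightarrow> ('n \<Rightarrow> 'n \<Rightarrow> bool) \<Rightarrow> bool" where
  "is_tree lev lt \<longleftrightarrow>
     (\<forall>\<alpha> \<beta>. \<alpha> \<noteq> \<beta> \<longrightarrow> lev \<alpha> \<inter> lev \<beta> = {}) \<and>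
     (\<forall>x y. lt x y \<longrightarrow> x \<in> tree_nodes lev \<and> y \<in> tree_nodes lev) \<and>
     (\<forall>x. \<not> lt x x) \<and>
     (\<forall>x y z. lt x y \<longrightarrow> lt y z \<longrightarrow> lt x z) \<and>
     (\<forall>\<alpha> \<beta> x y. x \<in> lev \<beta> \<longrightarrow> y \<in> lev \<alpha> \<longrightarrow> lt y x \<longrightarrow> \<alpha> < \<beta>) \<and>
     (\<forall>\<alpha> \<beta> x. x \<in> lev \<beta> \<longrightarrow> \<alpha> < \<beta> \<longrightarrow> (\<exists>!y. y \<in> lev \<alpha> \<and> lt y x))"

definition cofinal_branch :: "('k \<Rightarrow> 'n set) \<Rightarrow> ('n \<Rightarrow> 'n \<Rightarrow> bool) \<Rightarrow> 'n set \<Rightarrow> bool" where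
  "cofinal_branch lev lt B \<longleftrightarrow>
     B \<subseteq> tree_nodes lev \<and>
     (\<forall>x\<in>B. \<forall>y\<in>B. x = y \<or> lt x y \<or> lt y x) \<and>
     (\<forall>x\<in>B. \<forall>y. lt y x \<longrightarrow> y \<in> B) \<and>
     (\<forall>\<alpha>. B \<inter> lev \<alpha> \<noteq> {})"

text \<open>omega_2-Kurepa tree, where 'k is (the type of) omega_2 and 'j is omega_1:
  levels of size at most aleph_1 and at least aleph_3 cofinal branches.\<close>
definition kurepa_tree ::
  "(('k::wellorder) \<Rightarrow> 'n set) \<Rightarrow> ('n \<Rightarrow> 'n \<Rightarrow> bool) \<Rightarrow> ('j::wellorder) itself \<Rightarrow> bool" where
  "kurepa_tree lev lt _ \<longleftrightarrow>
     is_tree lev lt \<and>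
     (\<forall>\<alpha>. card_of (lev \<alpha>) <=o card_of (UNIV :: 'j set)) \<and>
     cardSuc (ord_rel :: 'k rel) <=o card_of {B. cofinal_branch lev lt B}"

definition branch_fun :: "('k \<Rightarrow> ('j::wellorder) \<Rightarrow> 'n) \<Rightarrow> 'n set \<Rightarrow> 'k \<Rightarrow> 'j" where
  "branch_fun \<tau> B \<alpha> = (LEAST \<xi>. \<tau> \<alpha> \<xi> \<in> B)"

definition unbounded :: "('k::wellorder) set \<Rightarrow> bool" where
  "unbounded A \<longleftrightarrow> (\<forall>\<alpha>. \<exists>\<beta>\<in>A. \<alpha> < \<beta>)"

definition oscillates :: "(('k::wellorder) \<Rightarrow> ('j::wellorder)) \<Rightarrow> 'k set \<Rightarrow> bool" where
  "oscillates b A \<longleftrightarrow> (\<forall>\<alpha> \<zeta>. \<exists>\<beta> \<xi>. \<beta> > \<alpha> \<and> \<beta> \<in> A \<and> \<xi> > \<zeta> \<and> b \<beta> = \<xi>)"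

end

theory Submission imports Defs begin

lemma Field_ord_rel: "Field (ord_rel :: ('a::wellorder) rel) = UNIV"
  unfolding ord_rel_def Field_def by auto

lemma underS_ord_rel: "underS (ord_rel :: ('a::wellorder) rel) a = {..<a}"
  unfolding ord_rel_def underS_def by auto

lemma card_UNIV_ord: "card_order (ord_rel :: ('a::wellorder) rel) \<Longrightarrow> |UNIV::'a set| =o (ord_rel :: 'a rel)"
  using card_of_unique ordIso_symmetric by blast

lemma Card_ord: "card_order (ord_rel :: ('a::wellorder) rel) \<Longrightarrow> Card_order (ord_rel :: 'a rel)"
  by (simp add: Field_ord_rel)

lemma lessThan_bound:
  assumes "card_order (ord_rel :: ('a::wellorder) rel)" "(ord_rel :: 'a rel) =o cardSuc r" "Card_order r"
  shows "|{..<(a::'a)}| \<le>o r"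
proof -
  have "|underS (ord_rel :: 'a rel) a| <o (ord_rel :: 'a rel)"
    using card_of_underS[OF Card_ord[OF assms(1)]] Field_ord_rel by blast
  hence "|{..<a}| <o cardSuc r" using underS_ord_rel assms(2) ordLess_ordIso_trans by metis
  thus ?thesis using cardSuc_ordLeq_ordLess[OF assms(3) card_of_Card_order] by blast
qed

lemma infinite_j:
  assumes "card_order (ord_rel :: ('j::wellorder) rel)" "(ord_rel :: 'j rel) =o cardSuc natLeq"
  shows "infinite (UNIV :: 'j set)"
proof -
  have "natLeq <o cardSuc natLeq" using cardSuc_greater natLeq_Card_order by blast
  hence "natLeq <o |UNIV :: 'j set|"
    using assms card_UNIV_ord ordIso_symmetric ordLess_ordIso_trans by metis
  thus ?thesis using infinite_iff_natLeq_ordLeq ordLess_imp_ordLeq by blast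
qed

lemma j_less_k:
  assumes "card_order (ord_rel :: ('j::wellorder) rel)"
    "card_order (ord_rel :: ('k::wellorder) rel)" "(ord_rel :: 'k rel) =o cardSuc (ord_rel :: 'j rel)"
  shows "|UNIV :: 'j set| <o |UNIV :: 'k set|"
proof -
  have "(ord_rel :: 'j rel) <o cardSuc (ord_rel :: 'j rel)" using cardSuc_greater Card_ord[OF assms(1)] by blast
  hence "(ord_rel :: 'j rel) <o |UNIV :: 'k set|"
    using assms card_UNIV_ord ordIso_symmetric ordLess_ordIso_trans by metis
  thus ?thesis using card_UNIV_ord[OF assms(1)] ordIso_ordLess_trans by blast
qed

lemma bounded_k:
  assumes j: "card_order (ord_rel :: ('j::wellorder) rel)" "infinite (UNIV :: 'j set)"
    and k: "card_order (ord_rel :: ('k::wellorder) rel)" "(ord_rel :: 'k rel) =o cardSuc (ord_rel :: 'j rel)"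
    and S: "|S| \<le>o |UNIV :: 'j set|"
  shows "\<exists>\<gamma>::'k. \<forall>s\<in>S. s \<le> \<gamma>"
proof (rule ccontr)
  assume "\<not> ?thesis"
  hence "\<forall>\<gamma>. \<exists>s\<in>S. \<gamma> < s" by (meson not_le)
  hence U: "(UNIV :: 'k set) = (\<Union>s\<in>S. {..<s})" by auto
  have "\<forall>s\<in>S. |{..<s}| \<le>o |UNIV :: 'j set|"
    using lessThan_bound[OF k Card_ord[OF j(1)]] card_UNIV_ord[OF j(1)] ordIso_symmetric ordLeq_ordIso_trans by blast
  hence "|\<Union>s\<in>S. {..<s}| \<le>o |UNIV :: 'j set|"
    using card_of_UNION_ordLeq_infinite[OF j(2) S] by blast
  hence "|UNIV :: 'k set| \<le>o |UNIV :: 'j set|" using U by simp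
  thus False using j_less_k[OF j(1) k] not_ordLess_ordLeq by blast
qed

lemma branch_single:
  assumes T: "is_tree lev lt" and B: "cofinal_branch lev lt B"
    and x: "x \<in> B" "x \<in> lev \<alpha>" and y: "y \<in> B" "y \<in> lev \<alpha>"
  shows "x = y"
proof -
  have "x = y \<or> lt x y \<or> lt y x" using B x y unfolding cofinal_branch_def by blast
  moreover have "\<not> lt x y" using T x y unfolding is_tree_def by blast
  moreover have "\<not> lt y x" using T x y unfolding is_tree_def by blast
  ultimately show ?thesis by blast
qed

lemma branch_agree:
  assumes T: "is_tree lev lt" and B: "cofinal_branch lev lt B" and B': "cofinal_branch lev lt B'"
    and x: "x \<in> B" "x \<in> B'" "x \<in> lev \<beta>" and d: "\<delta> < \<beta>"
  shows "B \<inter> lev \<delta> \<subseteq> B' \<inter> lev \<delta>"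
proof
  fix y assume y: "y \<in> B \<inter> lev \<delta>"
  obtain y0 where y0: "y0 \<in> lev \<delta>" "lt y0 x" using T x d unfolding is_tree_def by blast
  have "y0 \<in> B" "y0 \<in> B'" using B B' x y0 unfolding cofinal_branch_def by blast+
  with branch_single[OF T B] y y0 have "y = y0" by blast
  thus "y \<in> B' \<inter> lev \<delta>" using y0 \<open>y0 \<in> B'\<close> by blast
qed

lemma bf_in:
  assumes B: "cofinal_branch lev lt B" and tau: "range (\<tau> \<beta>) = lev \<beta>"
  shows "\<tau> \<beta> (branch_fun \<tau> B \<beta>) \<in> B \<inter> lev \<beta>"
proof -
  obtain x where "x \<in> B \<inter> lev \<beta>" using B unfolding cofinal_branch_def by blast
  then obtain \<xi> where "\<tau> \<beta> \<xi> \<in> B" using tau by (metis IntD1 IntD2 imageE)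
  hence "\<tau> \<beta> (branch_fun \<tau> B \<beta>) \<in> B" unfolding branch_fun_def by (rule LeastI)
  thus ?thesis using tau by blast
qed

lemma bf_distinct:
  assumes T: "is_tree lev lt" and B: "cofinal_branch lev lt B" and B': "cofinal_branch lev lt B'"
    and tau: "\<And>\<alpha>. range (\<tau> \<alpha>) = lev \<alpha>"
    and d: "B \<inter> lev \<delta> \<noteq> B' \<inter> lev \<delta>" and db: "\<delta> < \<beta>"
  shows "branch_fun \<tau> B \<beta> \<noteq> branch_fun \<tau> B' \<beta>"
proof
  assume eq: "branch_fun \<tau> B \<beta> = branch_fun \<tau> B' \<beta>"
  let ?x = "\<tau> \<beta> (branch_fun \<tau> B \<beta>)"
  have x: "?x \<in> B" "?x \<in> B'" "?x \<in> lev \<beta>" using bf_in[of lev lt B \<tau> \<beta>] bf_in[of lev lt B' \<tau> \<beta>] B B' tau eq by auto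
  have "B \<inter> lev \<delta> \<subseteq> B' \<inter> lev \<delta>" using branch_agree[OF T B B' x db] .
  moreover have "B' \<inter> lev \<delta> \<subseteq> B \<inter> lev \<delta>" using branch_agree[OF T B' B] x db by blast
  ultimately show False using d by blast
qed

lemma branch_differ:
  assumes B: "cofinal_branch lev lt B" and B': "cofinal_branch lev lt B'" and ne: "B \<noteq> B'"
  shows "\<exists>\<delta>. B \<inter> lev \<delta> \<noteq> B' \<inter> lev \<delta>"
proof (rule ccontr)
  assume "\<not> ?thesis"
  hence "\<forall>\<delta>. B \<inter> lev \<delta> = B' \<inter> lev \<delta>" by blast
  moreover have "B \<subseteq> (\<Union>\<delta>. lev \<delta>)" "B' \<subseteq> (\<Union>\<delta>. lev \<delta>)"
    using B B' unfolding cofinal_branch_def tree_nodes_def by auto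
  ultimately have "B = B'" by blast
  thus False using ne by blast
qed


lemma nat_less_j:
  assumes "card_order (ord_rel :: ('j::wellorder) rel)" "(ord_rel :: 'j rel) =o cardSuc natLeq"
  shows "natLeq <o |UNIV :: 'j set|"
proof -
  have "natLeq <o cardSuc natLeq" using cardSuc_greater natLeq_Card_order by blast
  thus ?thesis using assms card_UNIV_ord ordIso_symmetric ordLess_ordIso_trans by metis
qed

lemma atMost_countable:
  assumes "card_order (ord_rel :: ('j::wellorder) rel)" "(ord_rel :: 'j rel) =o cardSuc natLeq"
  shows "|{..(z::'j)}| \<le>o natLeq"
proof -
  have e: "{..z} = {z} \<union> {..<z}" by auto
  have "|{z}| \<le>o natLeq" using finite_iff_ordLess_natLeq ordLess_imp_ordLeq by blast
  moreover have "|{..<z}| \<le>o natLeq" using lessThan_bound[OF assms natLeq_Card_order] .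
  ultimately show ?thesis unfolding e by (rule Un_Cinfinite_bound[OF _ _ natLeq_Cinfinite])
qed

lemma F_bound:
  fixes lev :: "'k::wellorder \<Rightarrow> 'n set"
    and lt :: "'n \<Rightarrow> 'n \<Rightarrow> bool"
    and \<tau> :: "'k \<Rightarrow> 'j::wellorder \<Rightarrow> 'n"
    and A0 :: "'k set"
  assumes omega1: "card_order (ord_rel :: 'j rel)" "(ord_rel :: 'j rel) =o cardSuc natLeq"
    and omega2: "card_order (ord_rel :: 'k rel)" "(ord_rel :: 'k rel) =o cardSuc (ord_rel :: 'j rel)"
    and T: "is_tree lev lt"
    and tau: "\<And>\<alpha>. range (\<tau> \<alpha>) = lev \<alpha>"
    and unb: "unbounded A0"
  shows "|{B. cofinal_branch lev lt B \<and> (\<forall>\<beta>. \<alpha> < \<beta> \<longrightarrow> \<beta> \<in> A0 \<longrightarrow> branch_fun \<tau> B \<beta> \<le> \<zeta>)}| \<le>o |UNIV::'j set|"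
    (is "|?F| \<le>o _")
proof (rule ccontr)
  assume "\<not> ?thesis"
  hence "|UNIV::'j set| <o |?F|"
    using not_ordLeq_iff_ordLess[OF card_of_Well_order card_of_Well_order] by blast
  hence "|UNIV::'j set| \<le>o |?F|" by (rule ordLess_imp_ordLeq)
  then obtain g :: "'j \<Rightarrow> 'n set" where g: "inj_on g UNIV" "g ` UNIV \<subseteq> ?F" unfolding card_of_ordLeq[symmetric] by blast
  have infj: "infinite (UNIV :: 'j set)" using infinite_j[OF omega1] .
  define \<delta> where "\<delta> p = (SOME d. g (fst p) \<inter> lev d \<noteq> g (snd p) \<inter> lev d)" for p :: "'j \<times> 'j"
  let ?P = "{p::'j\<times>'j. fst p \<noteq> snd p}"
  have c1: "|\<delta> ` ?P| \<le>o |?P|" by (rule card_of_image)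
  have c2: "|?P| \<le>o |(UNIV::'j set) \<times> (UNIV::'j set)|" by (rule card_of_mono1) auto
  have c3: "|(UNIV::'j set) \<times> (UNIV::'j set)| \<le>o |UNIV::'j set|"
    by (rule ordIso_imp_ordLeq[OF card_of_Times_same_infinite[OF infj]])
  have "|\<delta> ` ?P| \<le>o |UNIV::'j set|" by (rule ordLeq_transitive[OF c1 ordLeq_transitive[OF c2 c3]])
  then obtain \<gamma> where \<gamma>: "\<forall>s\<in>\<delta> ` ?P. s \<le> \<gamma>" using bounded_k[OF omega1(1) infj omega2] by blast
  obtain \<beta> where \<beta>: "\<beta> \<in> A0" "max \<gamma> \<alpha> < \<beta>" using unb unfolding unbounded_def by blast
  define h where "h i = branch_fun \<tau> (g i) \<beta>" for i
  have br: "cofinal_branch lev lt (g i)" for i using g by blast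
  have "inj_on h UNIV"
  proof (rule inj_onI)
    fix i i' assume eq: "h i = h i'"
    show "i = i'"
    proof (rule ccontr)
      assume ne: "i \<noteq> i'"
      hence "g i \<noteq> g i'" using g(1) ne unfolding inj_on_def by blast
      hence "\<exists>d. g i \<inter> lev d \<noteq> g i' \<inter> lev d" using branch_differ[OF br[of i] br[of i']] by blast
      hence d: "g i \<inter> lev (\<delta> (i,i')) \<noteq> g i' \<inter> lev (\<delta> (i,i'))"
        unfolding \<delta>_def fst_conv snd_conv by (rule someI_ex)
      have "\<delta> (i,i') \<le> \<gamma>" using \<gamma> ne by auto
      moreover have "\<gamma> < \<beta>" using \<beta>(2) by simp
      ultimately have "\<delta> (i,i') < \<beta>" by (rule order_le_less_trans)
      hence "h i \<noteq> h i'" unfolding h_def using bf_distinct[OF T br[of i] br[of i'] tau d] by blast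
      thus False using eq by blast
    qed
  qed
  moreover have "h ` UNIV \<subseteq> {..\<zeta>}"
  proof -
    have "\<alpha> < \<beta>" using \<beta> by simp
    show ?thesis
    proof
      fix y assume "y \<in> h ` UNIV"
      then obtain i where y: "y = h i" by blast
      have "g i \<in> ?F" using g(2) by blast
      hence "branch_fun \<tau> (g i) \<beta> \<le> \<zeta>" using \<open>\<alpha> < \<beta>\<close> \<beta>(1) by blast
      thus "y \<in> {..\<zeta>}" unfolding y h_def by simp
    qed
  qed
  ultimately have "|UNIV::'j set| \<le>o |{..\<zeta>}|" unfolding card_of_ordLeq[symmetric] by blast
  hence "|UNIV::'j set| \<le>o natLeq" by (rule ordLeq_transitive[OF _ atMost_countable[OF omega1]])
  thus False using nat_less_j[OF omega1] not_ordLess_ordLeq by blast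
qed

theorem lemma9:
  fixes lev :: "'k::wellorder \<Rightarrow> 'n set"
    and lt :: "'n \<Rightarrow> 'n \<Rightarrow> bool"
    and \<tau> :: "'k \<Rightarrow> 'j::wellorder \<Rightarrow> 'n"
    and A :: "'k \<Rightarrow> 'k set"
  assumes omega1: "card_order (ord_rel :: 'j rel)" "(ord_rel :: 'j rel) =o cardSuc natLeq"
    and omega2: "card_order (ord_rel :: 'k rel)" "(ord_rel :: 'k rel) =o cardSuc (ord_rel :: 'j rel)"
    and kurepa: "kurepa_tree lev lt TYPE('j)"
    and tau: "\<And>\<alpha>. range (\<tau> \<alpha>) = lev \<alpha>"
    and unb: "\<And>\<iota>. unbounded (A \<iota>)"
  shows "\<exists>B. cofinal_branch lev lt B \<and> (\<forall>\<iota>. oscillates (branch_fun \<tau> B) (A \<iota>))"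
proof (rule ccontr)
  assume na: "\<not> ?thesis"
  have T: "is_tree lev lt" and Kur: "cardSuc (ord_rel :: 'k rel) \<le>o |{B. cofinal_branch lev lt B}|"
    using kurepa unfolding kurepa_tree_def by blast+
  define F where "F p = {B. cofinal_branch lev lt B \<and> (\<forall>\<beta>. fst (snd p) < \<beta> \<longrightarrow> \<beta> \<in> A (fst p) \<longrightarrow> branch_fun \<tau> B \<beta> \<le> snd (snd p))}"
    for p :: "'k \<times> 'k \<times> 'j"
  let ?I = "(UNIV::'k set) \<times> ((UNIV::'k set) \<times> (UNIV::'j set))"
  have sub: "{B. cofinal_branch lev lt B} \<subseteq> (\<Union>p\<in>?I. F p)"
  proof
    fix B assume B: "B \<in> {B. cofinal_branch lev lt B}"
    then obtain \<iota> where "\<not> oscillates (branch_fun \<tau> B) (A \<iota>)" using na by blast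
    then obtain \<alpha> \<zeta> where "\<forall>\<beta>. \<alpha> < \<beta> \<longrightarrow> \<beta> \<in> A \<iota> \<longrightarrow> \<not> \<zeta> < branch_fun \<tau> B \<beta>"
      unfolding oscillates_def by blast
    hence "\<forall>\<beta>. \<alpha> < \<beta> \<longrightarrow> \<beta> \<in> A \<iota> \<longrightarrow> branch_fun \<tau> B \<beta> \<le> \<zeta>"
      by (simp add: not_less)
    hence "B \<in> F (\<iota>, \<alpha>, \<zeta>)" using B unfolding F_def by auto
    thus "B \<in> (\<Union>p\<in>?I. F p)" by blast
  qed
  have infj: "infinite (UNIV :: 'j set)" using infinite_j[OF omega1] .
  have jk: "|UNIV :: 'j set| <o |UNIV :: 'k set|" using j_less_k[OF omega1(1) omega2] .
  have infk: "infinite (UNIV :: 'k set)"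
    using infj card_of_ordLeq_finite ordLess_imp_ordLeq[OF jk] by blast
  have fk: "\<not> finite (Field |UNIV::'k set| )" using infk by (simp add: Field_card_of)
  have kk: "|UNIV::'k set| \<le>o |UNIV::'k set|" using card_of_mono1[of "UNIV::'k set" UNIV] by simp
  have "|(UNIV::'k set) \<times> (UNIV::'j set)| \<le>o |UNIV::'k set|"
    by (rule card_of_Times_ordLeq_infinite_Field[OF fk kk ordLess_imp_ordLeq[OF jk] card_of_Card_order])
  hence I: "|?I| \<le>o |UNIV::'k set|"
    by (rule card_of_Times_ordLeq_infinite_Field[OF fk kk _ card_of_Card_order])
  have "\<forall>p\<in>?I. |F p| \<le>o |UNIV::'k set|"
  proof
    fix p :: "'k \<times> 'k \<times> 'j"
    have "|F p| \<le>o |UNIV::'j set|" unfolding F_def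
      using F_bound[OF omega1 omega2 T tau unb] by blast
    thus "|F p| \<le>o |UNIV::'k set|" using ordLess_imp_ordLeq[OF jk] ordLeq_transitive by blast
  qed
  hence "|\<Union>p\<in>?I. F p| \<le>o |UNIV::'k set|" using card_of_UNION_ordLeq_infinite[OF infk I] by blast
  hence "|{B. cofinal_branch lev lt B}| \<le>o |UNIV::'k set|"
    using card_of_mono1[OF sub] ordLeq_transitive by blast
  moreover have "|UNIV::'k set| <o cardSuc (ord_rel :: 'k rel)"
    using card_UNIV_ord[OF omega2(1)] cardSuc_greater[OF Card_ord[OF omega2(1)]] ordIso_ordLess_trans by blast
  ultimately have "|UNIV::'k set| <o |{B. cofinal_branch lev lt B}|"
    using Kur ordLess_ordLeq_trans by blast
  thus False using \<open>|{B. cofinal_branch lev lt B}| \<le>o |UNIV::'k set|\<close> not_ordLess_ordLeq by blast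
qed

end
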